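(* Let $f\colon\mathbb{R}^n\to\mathbb{R}$ be convex and differentiable with $\|\nabla f(x)-\nabla f(y)\|\le L\|x-y\|$ (Euclidean norm, $L>0$), with a minimizer $x_\star$, $f_\star=f(x_\star)$. Let $\theta_0=1$ and $\theta_{k+1}>0$ with $\theta_{k+1}^2-\theta_{k+1}=\theta_k^2$ for $k\ge0$. Given $x_0$, let $y_0=x_0$ and for $k\ge0$: $y_{k+1}=x_k-\frac1L\nabla f(x_k)$, $x_{k+1}=y_{k+1}+\frac{\theta_k-1}{\theta_{k+1}}(y_{k+1}-y_k)+\frac{\theta_k}{\theta_{k+1}}(y_{k+1}-x_k)$. Then for $k=1,2,\dots$, \[ f(y_k)-f_\star\le\frac{L\|x_0-x_\star\|^2}{4\theta_{k-1}^2}=\frac{L\|x_0-x_\star\|^2}{(k+\zeta)^2}-\frac{L\|x_0-x_\star\|^2\log k}{(k+\zeta)^3}+o\!\left(\frac1{k^3}\right), \] where $\zeta$ is the constant defined in the context.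
   Context: For this sequence $\{\theta_k\}$ the limit $\zeta:=\lim_{k\to\infty}\big(2\theta_k-k-1-\tfrac12\log k\big)$ exists (so $\theta_k=\frac{k+\zeta+1}{2}+\frac{\log k}{4}+o(1)$), with $\zeta\approx0.646$. $\log$ is the natural logarithm. *)

theory Defs
  imports "HOL-Analysis.Analysis" "HOL-Library.Landau_Symbols"
begin

definition fista_zeta :: "(nat \<Rightarrow> real) \<Rightarrow> real" where
  "fista_zeta \<theta> = lim (\<lambda>k. 2 * \<theta> k - real k - 1 - ln (real k) / 2)"

end

theory Submission
  imports Defs "HOL-Real_Asymp.Real_Asymp"
begin

lemma line_deriv:
  fixes f :: "'a::real_inner \<Rightarrow> real"
  assumes grad: "\<And>z. (f has_derivative (\<lambda>h. grad z \<bullet> h)) (at z)"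
  shows "((\<lambda>t. f (x + t *\<^sub>R d)) has_real_derivative (grad (x + t *\<^sub>R d) \<bullet> d)) (at t)"
proof -
  have 1: "((\<lambda>t. x + t *\<^sub>R d) has_derivative (\<lambda>s. s *\<^sub>R d)) (at t)"
    by (auto intro!: derivative_eq_intros)
  have "((\<lambda>t. f (x + t *\<^sub>R d)) has_derivative (\<lambda>s. grad (x + t *\<^sub>R d) \<bullet> (s *\<^sub>R d))) (at t)"
    by (rule has_derivative_compose[OF 1 grad])
  then show ?thesis
    by (rule has_derivative_imp_has_field_derivative) (simp add: mult.commute)
qed

lemma descent:
  fixes f :: "'a::real_inner \<Rightarrow> real"
  assumes grad: "\<And>z. (f has_derivative (\<lambda>h. grad z \<bullet> h)) (at z)"
    and lips: "\<And>a b. norm (grad a - grad b) \<le> L * norm (a - b)"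
  shows "f y \<le> f x + grad x \<bullet> (y - x) + L / 2 * norm (y - x) ^ 2"
proof -
  define d where "d = y - x"
  define q where "q t = f (x + t *\<^sub>R d) - f x - t * (grad x \<bullet> d) - L / 2 * t^2 * norm d ^ 2" for t
  have "q 1 \<le> q 0"
  proof (rule DERIV_nonpos_imp_nonincreasing[of 0 1 q])
    fix t :: real assume t: "0 \<le> t" "t \<le> 1"
    have D: "(q has_real_derivative (grad (x + t *\<^sub>R d) \<bullet> d - grad x \<bullet> d - L / 2 * (2 * t) * norm d ^ 2)) (at t)"
      unfolding q_def
      by (auto intro!: derivative_eq_intros line_deriv[OF grad])
    have "grad (x + t *\<^sub>R d) \<bullet> d - grad x \<bullet> d = (grad (x + t *\<^sub>R d) - grad x) \<bullet> d"
      by (simp add: inner_diff_left)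
    also have "\<dots> \<le> norm (grad (x + t *\<^sub>R d) - grad x) * norm d"
      by (rule norm_cauchy_schwarz)
    also have "\<dots> \<le> L * norm (t *\<^sub>R d) * norm d"
      using lips[of "x + t *\<^sub>R d" x] by (simp add: mult_right_mono)
    also have "\<dots> = L * t * norm d ^ 2" using t by (simp add: power2_eq_square)
    finally have "grad (x + t *\<^sub>R d) \<bullet> d - grad x \<bullet> d - L / 2 * (2 * t) * norm d ^ 2 \<le> 0" by simp
    with D show "\<exists>y. (q has_real_derivative y) (at t) \<and> y \<le> 0" by blast
  qed simp
  then show ?thesis by (simp add: q_def d_def)
qed

lemma first_order:
  fixes f :: "'a::real_inner \<Rightarrow> real"
  assumes conv: "convex_on UNIV f"
    and grad: "\<And>z. (f has_derivative (\<lambda>h. grad z \<bullet> h)) (at z)"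
  shows "f x + grad x \<bullet> (y - x) \<le> f y"
proof -
  define d where "d = y - x"
  define h where "h t = f (x + t *\<^sub>R d)" for t
  have hc: "convex_on UNIV h"
  proof (rule convex_onI)
    fix t a b :: real assume "0 < t" "t < 1"
    have "x + ((1 - t) *\<^sub>R a + t *\<^sub>R b) *\<^sub>R d = (1 - t) *\<^sub>R (x + a *\<^sub>R d) + t *\<^sub>R (x + b *\<^sub>R d)"
      by (simp add: algebra_simps)
    then show "h ((1 - t) *\<^sub>R a + t *\<^sub>R b) \<le> (1 - t) * h a + t * h b"
      unfolding h_def using convex_onD[OF conv, of t "x + a *\<^sub>R d" "x + b *\<^sub>R d"] \<open>0 < t\<close> \<open>t < 1\<close>
      by simp
  qed simp
  have "(h has_real_derivative (grad x \<bullet> d)) (at 0 within UNIV)"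
    unfolding h_def using line_deriv[OF grad, of x d 0] by simp
  from convex_on_imp_above_tangent[OF hc _ _ _ this, of 1]
  have "grad x \<bullet> d * (1 - 0) \<le> h 1 - h 0" by simp
  then show ?thesis by (simp add: h_def d_def)
qed

lemma interp:
  fixes f :: "'a::real_inner \<Rightarrow> real"
  assumes conv: "convex_on UNIV f"
    and grad: "\<And>z. (f has_derivative (\<lambda>h. grad z \<bullet> h)) (at z)"
    and lips: "\<And>a b. norm (grad a - grad b) \<le> L * norm (a - b)"
    and Lpos: "L > 0"
  shows "f x + grad x \<bullet> (y - x) + norm (grad y - grad x) ^ 2 / (2 * L) \<le> f y"
proof -
  define g where "g = grad y - grad x"
  define w where "w = y - (1 / L) *\<^sub>R g"
  have 1: "f x + grad x \<bullet> (w - x) \<le> f w" by (rule first_order[OF conv grad])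
  have 2: "f w \<le> f y + grad y \<bullet> (w - y) + L / 2 * norm (w - y) ^ 2" by (rule descent[OF grad lips])
  have wy: "w - y = - (1 / L) *\<^sub>R g" by (simp add: w_def)
  have "norm (w - y) ^ 2 = norm g ^ 2 / L^2" using Lpos by (simp add: wy power_divide)
  have "grad x \<bullet> (w - x) = grad x \<bullet> (y - x) + grad x \<bullet> (w - y)" by (simp add: inner_diff_right)
  have "f x + grad x \<bullet> (y - x) \<le> f y + (grad y - grad x) \<bullet> (w - y) + L / 2 * norm (w - y) ^ 2"
    using 1 2 \<open>grad x \<bullet> (w - x) = _\<close> by (simp add: inner_diff_left)
  also have "(grad y - grad x) \<bullet> (w - y) = - (norm g ^ 2 / L)"
    by (simp add: wy g_def power2_norm_eq_inner)
  also have "L / 2 * norm (w - y) ^ 2 = norm g ^ 2 / (2 * L)"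
    using Lpos \<open>norm (w - y) ^ 2 = _\<close> by (simp add: power2_eq_square field_simps)
  finally show ?thesis using Lpos by (simp add: g_def field_simps)
qed


lemma norm_sub_scale_sq:
  fixes P G :: "'a::real_inner"
  shows "norm (P - c *\<^sub>R G) ^ 2 = norm P ^ 2 - 2 * c * (G \<bullet> P) + c^2 * norm G ^ 2"
  by (simp only: power2_norm_eq_inner) (simp add: inner_diff_left inner_diff_right inner_commute power2_eq_square algebra_simps)

lemma auxB: fixes L :: real assumes "f1 + a + (n0 - 2*c + n1)/(2*L) \<le> f0" "B = s + c/L" "a = -s" "L>0" shows "f1 - F - n1/(2*L) \<le> f0 - F - n0/(2*L) + B - n1/L"
proof -
  have e: "(n0 - 2*c + n1)/(2*L) = (n0/L)/2 - c/L + (n1/L)/2" "n1/(2*L) = (n1/L)/2" "n0/(2*L) = (n0/L)/2" using assms(4) by (simp_all add: field_simps)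
  define P where "P = n0/L"
  define Q where "Q = n1/L"
  define r where "r = c/L"
  have "f1 + a + (P/2 - r + Q/2) \<le> f0" using assms(1) e unfolding P_def Q_def r_def by simp
  then show ?thesis unfolding e P_def[symmetric] Q_def[symmetric] r_def[symmetric] assms(2,3) by linarith
qed

lemma e5_aux: fixes L t N P2 C G2 M :: real
  assumes Lpos: "L > 0" and nz: "N = P2 - 2 * (2 * t / L) * C + (2 * t / L)^2 * G2" and M: "M = G2 / L"
  shows "L / 4 * N = L / 4 * P2 - t * C + t^2 * M"
proof -
  have a: "L/4 * (2*(2*t/L)) = t" using Lpos by simp
  have b: "L/4 * (2*t/L)^2 = t^2 / L" using Lpos by (simp add: power2_eq_square)
  have "L / 4 * N = L / 4 * P2 - (L/4 * (2*(2*t/L))) * C + (L/4 * (2*t/L)^2) * G2"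
    unfolding nz by (simp only: ring_distribs mult.assoc)
  also have "\<dots> = L / 4 * P2 - t * C + t^2 * M" unfolding a b M by simp
  finally show ?thesis .
qed

lemma fista_rate:
  fixes f :: "'a::real_inner \<Rightarrow> real" and grad :: "'a \<Rightarrow> 'a"
    and L :: real and xs :: "'a"
    and \<theta> :: "nat \<Rightarrow> real" and x y :: "nat \<Rightarrow> 'a"
  assumes conv: "convex_on UNIV f"
    and grad: "\<And>z. (f has_derivative (\<lambda>h. grad z \<bullet> h)) (at z)"
    and lips: "\<And>a b. norm (grad a - grad b) \<le> L * norm (a - b)"
    and Lpos: "L > 0"
    and minim: "\<And>z. f xs \<le> f z"
    and th0: "\<theta> 0 = 1"
    and thpos: "\<And>k. \<theta> (Suc k) > 0"
    and threc: "\<And>k. \<theta> (Suc k) ^ 2 - \<theta> (Suc k) = \<theta> k ^ 2"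
    and y0: "y 0 = x 0"
    and yrec: "\<And>k. y (Suc k) = x k - (1 / L) *\<^sub>R grad (x k)"
    and xrec: "\<And>k. x (Suc k) = y (Suc k)
                 + ((\<theta> k - 1) / \<theta> (Suc k)) *\<^sub>R (y (Suc k) - y k)
                 + (\<theta> k / \<theta> (Suc k)) *\<^sub>R (y (Suc k) - x k)"
  shows "f (y (Suc k)) - f xs \<le> L * norm (x 0 - xs) ^ 2 / (4 * \<theta> k ^ 2)"
proof -
  define g where "g i = grad (x i)" for i
  define D where "D i = f (x i) - f xs - norm (g i) ^ 2 / (2 * L)" for i
  define z where "z i = \<theta> i *\<^sub>R x i - (\<theta> i - 1) *\<^sub>R y i" for i
  define R2 where "R2 = norm (x 0 - xs) ^ 2"
  have thp: "\<theta> i > 0" for i using thpos th0 by (cases i) auto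
  have gxs: "grad xs = 0"
  proof -
    have "f (xs - (1 / L) *\<^sub>R grad xs) \<le> f xs + grad xs \<bullet> ((xs - (1 / L) *\<^sub>R grad xs) - xs)
        + L / 2 * norm ((xs - (1 / L) *\<^sub>R grad xs) - xs) ^ 2"
      by (rule descent[OF grad lips])
    also have "\<dots> = f xs - norm (grad xs) ^ 2 / (2 * L)"
      using Lpos by (simp only: power2_norm_eq_inner) (simp add: power2_eq_square field_simps)
    finally have "norm (grad xs) ^ 2 / (2 * L) \<le> 0" using minim[of "xs - (1 / L) *\<^sub>R grad xs"] by simp
    with Lpos have "norm (grad xs) ^ 2 \<le> 0" by (simp add: divide_le_0_iff)
    then show ?thesis by simp
  qed
  have A: "D i \<le> g i \<bullet> (x i - xs) - norm (g i) ^ 2 / L" for i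
  proof -
    have "f (x i) + grad (x i) \<bullet> (xs - x i) + norm (grad xs - grad (x i)) ^ 2 / (2 * L) \<le> f xs"
      by (rule interp[OF conv grad lips Lpos])
    moreover have "norm (grad (x i))^2/(2*L) = (norm (grad (x i))^2/L)/2" by simp
    ultimately show ?thesis unfolding D_def g_def gxs
      by (simp add: inner_diff_right)
  qed
  have B: "D (Suc i) \<le> D i + g (Suc i) \<bullet> (x (Suc i) - y (Suc i)) - norm (g (Suc i)) ^ 2 / L" for i
  proof -
    have "f (x (Suc i)) + grad (x (Suc i)) \<bullet> (x i - x (Suc i)) + norm (grad (x i) - grad (x (Suc i))) ^ 2 / (2 * L) \<le> f (x i)"
      by (rule interp[OF conv grad lips Lpos])
    moreover have "norm (g i - g (Suc i)) ^ 2 = norm (g i) ^ 2 - 2 * (g (Suc i) \<bullet> g i) + norm (g (Suc i)) ^ 2"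
      by (simp add: power2_norm_eq_inner inner_diff_left inner_diff_right inner_commute)
    moreover have "g (Suc i) \<bullet> (x (Suc i) - y (Suc i)) = g (Suc i) \<bullet> (x (Suc i) - x i) + (g (Suc i) \<bullet> g i) / L"
      by (simp add: yrec g_def inner_diff_right)
    moreover have "g (Suc i) \<bullet> (x i - x (Suc i)) = - (g (Suc i) \<bullet> (x (Suc i) - x i))"
      by (simp add: inner_diff_right)
    ultimately have "f (x (Suc i)) + g (Suc i) \<bullet> (x i - x (Suc i)) + (norm (g i) ^ 2 - 2 * (g (Suc i) \<bullet> g i) + norm (g (Suc i)) ^ 2) / (2 * L) \<le> f (x i)"
      "g (Suc i) \<bullet> (x (Suc i) - y (Suc i)) = g (Suc i) \<bullet> (x (Suc i) - x i) + (g (Suc i) \<bullet> g i) / L"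
      "g (Suc i) \<bullet> (x i - x (Suc i)) = - (g (Suc i) \<bullet> (x (Suc i) - x i))"
      unfolding g_def by simp_all
    then show ?thesis unfolding D_def by (intro auxB[OF _ _ _ Lpos])
  qed
  have zrec: "z (Suc i) = z i - (2 * \<theta> i / L) *\<^sub>R g i" for i
  proof -
    have "z (Suc i) = \<theta> (Suc i) *\<^sub>R x (Suc i) - (\<theta> (Suc i) - 1) *\<^sub>R y (Suc i)" by (simp add: z_def)
    also have "\<theta> (Suc i) *\<^sub>R x (Suc i) = \<theta> (Suc i) *\<^sub>R y (Suc i) + (\<theta> i - 1) *\<^sub>R (y (Suc i) - y i) + \<theta> i *\<^sub>R (y (Suc i) - x i)"
      using thp[of "Suc i"] by (simp add: xrec scaleR_add_right)
    finally have "z (Suc i) = y (Suc i) + (\<theta> i - 1) *\<^sub>R (y (Suc i) - y i) + \<theta> i *\<^sub>R (y (Suc i) - x i)"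
      by (simp add: algebra_simps)
    also have "\<dots> = z i - (2 * \<theta> i / L) *\<^sub>R g i"
      by (simp add: yrec z_def g_def algebra_simps flip: scaleR_add_left)
    finally show ?thesis .
  qed
  have base: "D 0 + L / 4 * norm (z 1 - xs) ^ 2 \<le> L / 4 * R2"
  proof -
    have z0: "z 0 = x 0" by (simp add: z_def th0)
    have zz0: "z 1 - xs = (x 0 - xs) - (2 / L) *\<^sub>R g 0" using zrec[of 0] by (simp add: z0 th0 algebra_simps)
    have "norm (z 1 - xs) ^ 2 = R2 - 2 * (2 / L) * (g 0 \<bullet> (x 0 - xs)) + (2 / L)^2 * norm (g 0) ^ 2"
      unfolding zz0 R2_def by (rule norm_sub_scale_sq)
    then have "L / 4 * norm (z 1 - xs) ^ 2 = L / 4 * R2 - g 0 \<bullet> (x 0 - xs) + norm (g 0) ^ 2 / L"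
      using Lpos by (simp add: field_simps power2_eq_square)
    then show ?thesis using A[of 0] by linarith
  qed
  have step: "\<theta> (Suc i) ^ 2 * D (Suc i) + L / 4 * norm (z (Suc (Suc i)) - xs) ^ 2
      \<le> \<theta> i ^ 2 * D i + L / 4 * norm (z (Suc i) - xs) ^ 2" for i
  proof -
    define t where "t = \<theta> (Suc i)"
    define G where "G = g (Suc i)"
    define P where "P = z (Suc i) - xs"
    have tp: "t > 0" by (simp add: t_def thp)
    have tt: "t ^ 2 - t = \<theta> i ^ 2" by (simp add: t_def threc)
    have zz: "z (Suc (Suc i)) - xs = P - (2 * t / L) *\<^sub>R G"
      by (simp add: zrec[of "Suc i"] P_def t_def G_def algebra_simps)
    have nz: "norm (z (Suc (Suc i)) - xs) ^ 2 = norm P ^ 2 - 2 * (2 * t / L) * (G \<bullet> P) + (2 * t / L)^2 * norm G ^ 2"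
      by (simp add: zz norm_sub_scale_sq)
    have vec: "(t^2 - t) *\<^sub>R (x (Suc i) - y (Suc i)) + t *\<^sub>R (x (Suc i) - xs) = t *\<^sub>R P"
      by (simp add: P_def z_def t_def algebra_simps power2_eq_square)
    have inn: "(t^2 - t) * (G \<bullet> (x (Suc i) - y (Suc i))) + t * (G \<bullet> (x (Suc i) - xs)) = t * (G \<bullet> P)"
    proof -
      have "G \<bullet> ((t^2 - t) *\<^sub>R (x (Suc i) - y (Suc i)) + t *\<^sub>R (x (Suc i) - xs)) = G \<bullet> (t *\<^sub>R P)"
        by (simp only: vec)
      then show ?thesis by (simp add: inner_add_right)
    qed
    define M where "M = norm G ^ 2 / L"
    define Bs where "Bs = G \<bullet> (x (Suc i) - y (Suc i))"
    define As where "As = G \<bullet> (x (Suc i) - xs)"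
    define Cs where "Cs = G \<bullet> P"
    have B': "(t^2 - t) * D (Suc i) \<le> (t^2 - t) * (D i + Bs - M)"
      using B[of i] tt by (intro mult_left_mono) (auto simp: G_def M_def Bs_def)
    have A': "t * D (Suc i) \<le> t * (As - M)"
      using A[of "Suc i"] tp by (intro mult_left_mono) (auto simp: G_def M_def As_def)
    have e1: "t^2 * D (Suc i) = (t^2 - t) * D (Suc i) + t * D (Suc i)" by (simp add: algebra_simps)
    have e2: "(t^2 - t) * (D i + Bs - M) = \<theta> i ^ 2 * D i + (t^2 - t) * Bs - (t^2 - t) * M"
      by (simp add: tt algebra_simps)
    have e3: "t * (As - M) = t * As - t * M" by (simp add: algebra_simps)
    have e4: "(t^2 - t) * M + t * M = t^2 * M" by (simp add: algebra_simps)
    have inn': "(t^2 - t) * Bs + t * As = t * Cs" using inn by (simp add: Bs_def As_def Cs_def)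
    have main: "t^2 * D (Suc i) \<le> \<theta> i ^ 2 * D i + t * Cs - t^2 * M"
      using B' A' e1 e2 e3 e4 inn' by linarith
    have e5: "L / 4 * norm (z (Suc (Suc i)) - xs) ^ 2 = L / 4 * norm P ^ 2 - t * Cs + t^2 * M"
      by (rule e5_aux[OF Lpos nz[unfolded Cs_def[symmetric]] M_def])
    show ?thesis using main e5 unfolding t_def[symmetric] P_def[symmetric] by linarith
  qed
  have all: "\<theta> i ^ 2 * D i + L / 4 * norm (z (Suc i) - xs) ^ 2 \<le> L / 4 * R2" for i
  proof (induction i)
    case 0 then show ?case using base th0 by simp
  next
    case (Suc i) then show ?case using step[of i] by linarith
  qed
  have "0 \<le> L / 4 * norm (z (Suc k) - xs) ^ 2" using Lpos by simp
  then have "\<theta> k ^ 2 * D k \<le> L / 4 * R2" using all[of k] by linarith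
  then have "D k \<le> (L / 4 * R2) / \<theta> k ^ 2" using thp[of k] by (simp add: pos_le_divide_eq mult.commute)
  moreover have "(L / 4 * R2) / \<theta> k ^ 2 = L * R2 / (4 * \<theta> k ^ 2)" by simp
  moreover have "f (y (Suc k)) - f xs \<le> D k"
  proof -
    have "f (y (Suc k)) \<le> f (x k) + grad (x k) \<bullet> (y (Suc k) - x k) + L / 2 * norm (y (Suc k) - x k) ^ 2"
      by (rule descent[OF grad lips])
    also have "\<dots> = f (x k) - norm (g k) ^ 2 / (2 * L)"
    proof -
      have ii: "grad (x k) \<bullet> grad (x k) = norm (grad (x k)) ^ 2" by (simp add: power2_norm_eq_inner)
      have "grad (x k) \<bullet> (y (Suc k) - x k) = - (norm (grad (x k)) ^ 2 / L)"
        by (simp add: yrec ii)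
      moreover have "L / 2 * norm (y (Suc k) - x k) ^ 2 = norm (grad (x k)) ^ 2 / (2 * L)"
        using Lpos by (simp add: yrec power2_eq_square field_simps)
      moreover have "norm (grad (x k)) ^ 2 / (2 * L) = (norm (grad (x k)) ^ 2 / L) / 2" by simp
      ultimately show ?thesis unfolding g_def by linarith
    qed
    finally show ?thesis by (simp add: D_def)
  qed
  ultimately show ?thesis unfolding R2_def by linarith
qed

lemma sqrt_step:
  fixes u v :: real assumes u1: "u \<ge> 1" and vp: "v > 0" and vsq: "v^2 = 1 + u^2"
  shows "u \<le> v" "v - u \<le> 1/(2*u)" "\<bar>(v - u) - 1/(2*u)\<bar> \<le> 1/u^2"
proof -
  have "u^2 \<le> v^2" using vsq by simp
  then show uv: "u \<le> v" using power2_le_imp_le[OF _ less_imp_le[OF vp]] by blast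
  have vu: "(v - u) * (v + u) = 1" using vsq by (simp add: algebra_simps power2_eq_square)
  have vp2: "v + u \<ge> 2 * u" using uv by simp
  have w: "v - u = 1 / (v + u)" using vu vp u1 by (simp add: eq_divide_eq)
  show w2: "v - u \<le> 1/(2*u)" unfolding w using vp2 u1 by (intro divide_left_mono) auto
  have "1/(2*u) - (v - u) = ((v-u)*(v+u) - 2*u*(v-u))/(2*u)" using vu u1 by (simp add: field_simps)
  also have "\<dots> = (v-u)^2/(2*u)" by (simp add: power2_eq_square algebra_simps)
  also have "\<dots> \<le> (1/(2*u))^2/(2*u)"
    using w2 u1 uv by (intro divide_right_mono power_mono) auto
  also have "\<dots> \<le> 1/u^2" using u1 by (simp add: field_simps power2_eq_square)
  finally have a: "1/(2*u) - (v - u) \<le> 1/u^2" .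
  have b: "0 \<le> 1/(2*u) - (v - u)" using w2 by simp
  show "\<bar>(v - u) - 1/(2*u)\<bar> \<le> 1/u^2" using a b by linarith
qed
lemma ident_aux:
  fixes a s l :: real assumes "a \<noteq> 0" "s \<noteq> 0"
  shows "1 / s^2 - (1 / a^2 - l / a^3) = (3*a*(s-a)^2 + 2*(s-a)^3) / (a^3 * s^2) + (l - 2*(s-a)) / a^3"
proof -
  have p: "a^3 - a* s^2 + 2*(s-a)* s^2 = 3*a*(s-a)^2 + 2*(s-a)^3" by algebra
  have "1 / s^2 - (1 / a^2 - l / a^3) = (a^3 - a* s^2 + 2*(s-a)* s^2) / (a^3 * s^2) + (l - 2*(s-a)) / a^3"
    using assms by (simp add: field_simps power2_eq_square power3_eq_cube)
  then show ?thesis unfolding p .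
qed

lemma bound_aux:
  fixes k a s e m :: real
  assumes kp: "k > 0" and ak: "a \<ge> k / 2" and sk: "s \<ge> k" and em: "\<bar>e\<bar> \<le> m" and es: "e = s - a"
  shows "\<bar>k^3 * (3*a*e^2 + 2*e^3) / (a^3 * s^2)\<bar> \<le> 8 * m^2 * (3 / k + m / k^2)"
proof -
  have ap: "a > 0" using ak kp by simp
  have sp: "s > 0" using sk kp by simp
  have m0: "m \<ge> 0" using em by simp
  have se: "s = a + e" using es by simp
  have "3*a*e^2 + 2*e^3 = e^2 * (3* s - e)" unfolding se by (simp add: power2_eq_square power3_eq_cube algebra_simps)
  then have "\<bar>3*a*e^2 + 2*e^3\<bar> = e^2 * \<bar>3* s - e\<bar>" by (simp add: abs_mult)
  also have "\<dots> \<le> m^2 * (3* s + m)"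
  proof (rule mult_mono)
    show "e^2 \<le> m^2" using em by (metis abs_le_square_iff abs_of_nonneg m0)
    show "\<bar>3* s - e\<bar> \<le> 3* s + m" using em sp by linarith
  qed (use m0 in auto)
  finally have num: "\<bar>3*a*e^2 + 2*e^3\<bar> \<le> m^2 * (3* s + m)" .
  have den: "(k/2)^3 \<le> a^3" using ak kp by (intro power_mono) auto
  have "\<bar>k^3 * (3*a*e^2 + 2*e^3) / (a^3 * s^2)\<bar> = k^3 * \<bar>3*a*e^2 + 2*e^3\<bar> / (a^3 * s^2)"
    using ap sp kp by (simp add: abs_mult)
  also have "\<dots> \<le> k^3 * (m^2 * (3* s + m)) / ((k/2)^3 * s^2)"
    using num den kp sp ap by (intro frac_le mult_left_mono mult_right_mono) auto
  also have "\<dots> = 8 * m^2 * (3 / s + m / s^2)"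
    using kp sp by (simp add: field_simps power2_eq_square power3_eq_cube)
  also have "\<dots> \<le> 8 * m^2 * (3 / k + m / k^2)"
    using kp sk m0 by (intro mult_left_mono add_mono divide_left_mono power_mono mult_pos_pos) auto
  finally show ?thesis .
qed

locale thseq =
  fixes \<theta> :: "nat \<Rightarrow> real"
  assumes th0: "\<theta> 0 = 1"
    and thpos: "\<And>k. \<theta> (Suc k) > 0"
    and threc: "\<And>k. \<theta> (Suc k) ^ 2 - \<theta> (Suc k) = \<theta> k ^ 2"
begin

lemma th_ge1: "\<theta> k \<ge> 1"
proof (cases k)
  case 0 then show ?thesis by (simp add: th0)
next
  case (Suc j)
  have "\<theta> j \<noteq> 0" using thpos[of "j - 1"] th0 by (cases j) auto
  then have "\<theta> j ^ 2 > 0" by simp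
  then have "\<theta> (Suc j) * (\<theta> (Suc j) - 1) > 0" using threc[of j] by (simp add: power2_eq_square algebra_simps)
  then have "\<theta> (Suc j) - 1 > 0" using thpos[of j] by (simp add: zero_less_mult_iff)
  then show ?thesis using Suc by simp
qed

lemma step_bounds:
  "2 * \<theta> k + 1 \<le> 2 * \<theta> (Suc k)"
  "2 * \<theta> (Suc k) \<le> 2 * \<theta> k + 1 + 1 / (2 * (2 * \<theta> k))"
  "\<bar>(2 * \<theta> (Suc k) - 2 * \<theta> k - 1) - 1 / (2 * (2 * \<theta> k))\<bar> \<le> 1 / (2 * \<theta> k) ^ 2"
proof -
  have u1: "2 * \<theta> k \<ge> 1" using th_ge1[of k] by simp
  have vp: "2 * \<theta> (Suc k) - 1 > 0" using th_ge1[of "Suc k"] by simp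
  have vsq: "(2 * \<theta> (Suc k) - 1) ^ 2 = 1 + (2 * \<theta> k) ^ 2"
    using threc[of k] by (simp add: power2_eq_square algebra_simps)
  note S = sqrt_step[OF u1 vp vsq]
  show "2 * \<theta> k + 1 \<le> 2 * \<theta> (Suc k)" using S(1) by simp
  show "2 * \<theta> (Suc k) \<le> 2 * \<theta> k + 1 + 1 / (2 * (2 * \<theta> k))" using S(2) by simp
  show "\<bar>(2 * \<theta> (Suc k) - 2 * \<theta> k - 1) - 1 / (2 * (2 * \<theta> k))\<bar> \<le> 1 / (2 * \<theta> k) ^ 2"
    using S(3) by (simp add: algebra_simps)
qed

lemma u_lower: "2 * \<theta> k \<ge> real k + 2"
proof (induction k)
  case 0 then show ?case by (simp add: th0)
next
  case (Suc k) then show ?case using step_bounds(1)[of k] by simp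
qed

lemma u_upper: "2 * \<theta> k \<le> real k + 2 + ln (real k + 1)"
proof (induction k)
  case 0 then show ?case by (simp add: th0)
next
  case (Suc k)
  have "1 / (2 * (2 * \<theta> k)) \<le> 1 / (real k + 2)"
    using u_lower[of k] by (intro divide_left_mono) auto
  also have "\<dots> \<le> ln (real k + 2) - ln (real k + 1)"
    using ln_diff_le[of "real k + 1" "real k + 2"] by (simp add: field_simps)
  finally have "1 / (2 * (2 * \<theta> k)) \<le> ln (real k + 2) - ln (real k + 1)" .
  then show ?case using Suc step_bounds(2)[of k] by (simp add: algebra_simps)
qed

definition d :: "nat \<Rightarrow> real" where "d k = 2 * \<theta> k - real k - 1 - ln (real k) / 2"

lemma dd_bound:
  assumes k: "k \<ge> 1"
  shows "\<bar>d (Suc k) - d k\<bar> \<le> 1 / real k ^ 2 + (2 + ln (real k + 1)) / (2 * real k ^ 2)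
           + \<bar>1 / (2 * real k) - (ln (real k + 1) - ln (real k)) / 2\<bar>"
proof -
  define u where "u = 2 * \<theta> k"
  define X where "X = (2 * \<theta> (Suc k) - 2 * \<theta> k - 1) - 1 / (2 * u)"
  define Y where "Y = 1 / (2 * u) - 1 / (2 * real k)"
  define Z where "Z = 1 / (2 * real k) - (ln (real k + 1) - ln (real k)) / 2"
  have kp: "real k > 0" using k by simp
  have uk: "u \<ge> real k + 2" using u_lower[of k] by (simp add: u_def)
  have uk2: "u \<le> real k + 2 + ln (real k + 1)" using u_upper[of k] by (simp add: u_def)
  have up: "u > 0" using uk kp by simp
  have "d (Suc k) - d k = X + Y + Z" by (simp add: d_def X_def Y_def Z_def u_def field_simps)
  then have "\<bar>d (Suc k) - d k\<bar> \<le> \<bar>X\<bar> + \<bar>Y\<bar> + \<bar>Z\<bar>" by linarith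
  moreover have "\<bar>X\<bar> \<le> 1 / real k ^ 2"
  proof -
    have "\<bar>X\<bar> \<le> 1 / u ^ 2" using step_bounds(3)[of k] by (simp add: X_def u_def)
    also have "\<dots> \<le> 1 / real k ^ 2" using uk kp by (intro divide_left_mono power_mono mult_pos_pos) auto
    finally show ?thesis .
  qed
  moreover have "\<bar>Y\<bar> \<le> (2 + ln (real k + 1)) / (2 * real k ^ 2)"
  proof -
    have Y: "Y = - ((u - real k) / (2 * u * real k))" using up kp by (simp add: Y_def field_simps)
    have "(u - real k) / (2 * u * real k) \<le> (2 + ln (real k + 1)) / (2 * real k ^ 2)"
      using uk uk2 kp up by (intro frac_le) (auto simp: power2_eq_square intro!: mult_right_mono)
    moreover have "0 \<le> (u - real k) / (2 * u * real k)" using uk kp up by simp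
    ultimately show ?thesis unfolding Y by simp
  qed
  ultimately show ?thesis unfolding Z_def by linarith
qed

lemma d_convergent: "convergent d"
proof -
  define B where "B k = 1 / real k ^ 2 + (2 + ln (real k + 1)) / (2 * real k ^ 2)
           + \<bar>1 / (2 * real k) - (ln (real k + 1) - ln (real k)) / 2\<bar>" for k
  have ev1: "eventually (\<lambda>k. norm (d (Suc k) - d k) \<le> B k) sequentially"
    using eventually_ge_at_top[of 1] by eventually_elim (simp add: B_def dd_bound)
  have ev2: "eventually (\<lambda>k. B k \<le> real k powr (-3/2)) sequentially"
    unfolding B_def by real_asymp
  have sm: "summable (\<lambda>k. d (Suc k) - d k)"
  proof (rule summable_comparison_test_ev)
    show "eventually (\<lambda>k. norm (d (Suc k) - d k) \<le> real k powr (-3/2)) sequentially"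
      using ev1 ev2 by eventually_elim simp
    show "summable (\<lambda>k. real k powr (-3/2))" by (simp add: summable_real_powr_iff)
  qed
  have "(\<lambda>k. d 0 + (\<Sum>i<k. d (Suc i) - d i)) \<longlonglongrightarrow> d 0 + suminf (\<lambda>k. d (Suc k) - d k)"
    by (intro tendsto_add tendsto_const summable_LIMSEQ sm)
  then have "d \<longlonglongrightarrow> d 0 + suminf (\<lambda>k. d (Suc k) - d k)"
    by (simp add: sum_lessThan_telescope)
  then show ?thesis by (rule convergentI)
qed

end


context thseq begin

lemma asym:
  fixes C :: real
  defines "z \<equiv> lim d"
  shows "(\<lambda>k. C / (4 * \<theta> (k - 1) ^ 2) - (C / (real k + z) ^ 2 - C * ln (real k) / (real k + z) ^ 3))
       \<in> o(\<lambda>k. 1 / real k ^ 3)"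
proof -
  have dz: "d \<longlonglongrightarrow> z" using d_convergent unfolding z_def by (simp add: convergent_LIMSEQ_iff)
  define \<delta> where "\<delta> k = d (k - 1) - z" for k
  have \<delta>0: "\<delta> \<longlonglongrightarrow> 0" unfolding \<delta>_def using tendsto_diff[OF seq_offset_neg[OF dz, of 1] tendsto_const[of z]] by simp
  define E where "E k = 1 / (4 * \<theta> (k - 1) ^ 2) - (1 / (real k + z) ^ 2 - ln (real k) / (real k + z) ^ 3)" for k
  define F1 where "F1 k = real k ^ 3 * (3 * (real k + z) * (2 * \<theta> (k - 1) - (real k + z)) ^ 2
      + 2 * (2 * \<theta> (k - 1) - (real k + z)) ^ 3) / ((real k + z) ^ 3 * (2 * \<theta> (k - 1)) ^ 2)" for k
  define F2 where "F2 k = (real k / (real k + z)) ^ 3 * (ln (real k) - ln (real k - 1) - 2 * \<delta> k)" for k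
  define H where "H k = 8 * (ln (real k) + 1) ^ 2 * (3 / real k + (ln (real k) + 1) / real k ^ 2)" for k
  have ev_e: "eventually (\<lambda>k. 2 * \<theta> (k - 1) - (real k + z) = \<delta> k + ln (real k - 1) / 2) sequentially"
    using eventually_ge_at_top[of 1]
  proof eventually_elim
    case (elim k)
    then have "real (k - 1) = real k - 1" by simp
    then show ?case by (simp add: \<delta>_def d_def)
  qed
  have ev_split: "eventually (\<lambda>k. real k ^ 3 * E k = F1 k + F2 k) sequentially"
    using eventually_ge_at_top[of "nat \<lceil>2 * \<bar>z\<bar>\<rceil> + 1"] ev_e
  proof eventually_elim
    case (elim k)
    have kz: "real k > \<bar>z\<bar>" using elim(1) by linarith
    have a0: "real k + z \<noteq> 0" using kz by linarith
    have s0: "2 * \<theta> (k - 1) \<noteq> 0" using th_ge1[of "k - 1"] by simp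
    have "E k = 1 / (2 * \<theta> (k - 1)) ^ 2 - (1 / (real k + z) ^ 2 - ln (real k) / (real k + z) ^ 3)"
      by (simp add: E_def power_mult_distrib)
    also have "\<dots> = (3*(real k + z)*(2 * \<theta> (k - 1)-(real k + z))^2 + 2*(2 * \<theta> (k - 1)-(real k + z))^3)
        / ((real k + z)^3 * (2 * \<theta> (k - 1))^2) + (ln (real k) - 2*(2 * \<theta> (k - 1)-(real k + z))) / (real k + z)^3"
      by (rule ident_aux[OF a0 s0])
    finally have "real k ^ 3 * E k = F1 k + real k ^ 3 * ((ln (real k) - 2*(2 * \<theta> (k - 1)-(real k + z))) / (real k + z)^3)"
      unfolding F1_def by (simp add: distrib_left)
    also have "real k ^ 3 * ((ln (real k) - 2*(2 * \<theta> (k - 1)-(real k + z))) / (real k + z)^3) = F2 k"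
      unfolding F2_def elim(2) by (simp add: power_divide)
    finally show ?case .
  qed
  have ev_d: "eventually (\<lambda>k. norm (\<delta> k) < 1/2) sequentially"
    using order_tendstoD(2)[OF tendsto_norm[OF \<delta>0], of "1/2"] by simp
  have ev_bound: "eventually (\<lambda>k. norm (F1 k) \<le> H k) sequentially"
    using eventually_ge_at_top[of "nat \<lceil>2 * \<bar>z\<bar>\<rceil> + 2"] ev_e ev_d
  proof eventually_elim
    case (elim k)
    have k2: "real k \<ge> 2" using elim(1) by linarith
    have kz: "real k \<ge> 2 * \<bar>z\<bar>" using elim(1) by linarith
    have "\<bar>2 * \<theta> (k - 1) - (real k + z)\<bar> \<le> ln (real k) + 1"
    proof -
      have "ln (real k - 1) \<le> ln (real k)" using k2 by simp
      moreover have "ln (real k - 1) \<ge> 0" using k2 by simp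
      ultimately show ?thesis using elim(2,3) by simp
    qed
    moreover have "2 * \<theta> (k - 1) \<ge> real k"
      using u_lower[of "k - 1"] k2 by (simp add: of_nat_diff)
    ultimately show ?case unfolding F1_def H_def real_norm_def
      using kz k2 by (intro bound_aux) auto
  qed
  have F1: "F1 \<longlonglongrightarrow> 0"
  proof (rule Lim_null_comparison[OF ev_bound])
    show "H \<longlonglongrightarrow> 0" unfolding H_def by real_asymp
  qed
  have F2: "F2 \<longlonglongrightarrow> 0"
  proof -
    have r: "(\<lambda>k. real k / (real k + z)) \<longlonglongrightarrow> 1" by real_asymp
    have l: "(\<lambda>k. ln (real k) - ln (real k - 1)) \<longlonglongrightarrow> 0" by real_asymp
    have "F2 \<longlonglongrightarrow> 1 ^ 3 * (0 - 2 * 0)"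
      unfolding F2_def by (intro tendsto_intros r l \<delta>0)
    then show ?thesis by simp
  qed
  have kE: "(\<lambda>k. real k ^ 3 * E k) \<longlonglongrightarrow> 0"
  proof -
    have "(\<lambda>k. F1 k + F2 k) \<longlonglongrightarrow> 0" using tendsto_add[OF F1 F2] by simp
    then show ?thesis using tendsto_cong[OF ev_split] by simp
  qed
  show ?thesis
  proof (rule smalloI_tendsto)
    have "(\<lambda>k. C * (real k ^ 3 * E k)) \<longlonglongrightarrow> C * 0" by (intro tendsto_intros kE)
    moreover have "\<forall>k. C * (real k ^ 3 * E k) = (C / (4 * \<theta> (k - 1) ^ 2) - (C / (real k + z) ^ 2 - C * ln (real k) / (real k + z) ^ 3)) / (1 / real k ^ 3)"
      by (simp add: E_def field_simps)
    ultimately show "(\<lambda>k. (C / (4 * \<theta> (k - 1) ^ 2) - (C / (real k + z) ^ 2 - C * ln (real k) / (real k + z) ^ 3)) / (1 / real k ^ 3)) \<longlonglongrightarrow> 0"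
      by simp
    show "eventually (\<lambda>k. 1 / real k ^ 3 \<noteq> (0::real)) sequentially"
      using eventually_ge_at_top[of 1] by eventually_elim auto
  qed
qed

end

theorem corollary1:
  fixes f :: "real ^ 'n \<Rightarrow> real" and grad :: "real ^ 'n \<Rightarrow> real ^ 'n"
    and L :: real and xs :: "real ^ 'n"
    and \<theta> :: "nat \<Rightarrow> real" and x y :: "nat \<Rightarrow> real ^ 'n"
  assumes conv: "convex_on UNIV f"
    and grad: "\<And>z. (f has_derivative (\<lambda>h. grad z \<bullet> h)) (at z)"
    and lips: "\<And>a b. norm (grad a - grad b) \<le> L * norm (a - b)"
    and Lpos: "L > 0"
    and minim: "\<And>z. f xs \<le> f z"
    and th0: "\<theta> 0 = 1"
    and thpos: "\<And>k. \<theta> (Suc k) > 0"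
    and threc: "\<And>k. \<theta> (Suc k) ^ 2 - \<theta> (Suc k) = \<theta> k ^ 2"
    and y0: "y 0 = x 0"
    and yrec: "\<And>k. y (Suc k) = x k - (1 / L) *\<^sub>R grad (x k)"
    and xrec: "\<And>k. x (Suc k) = y (Suc k)
                 + ((\<theta> k - 1) / \<theta> (Suc k)) *\<^sub>R (y (Suc k) - y k)
                 + (\<theta> k / \<theta> (Suc k)) *\<^sub>R (y (Suc k) - x k)"
  shows "(\<forall>k\<ge>1. f (y k) - f xs \<le> L * norm (x 0 - xs) ^ 2 / (4 * \<theta> (k - 1) ^ 2))
    \<and> (\<lambda>k. L * norm (x 0 - xs) ^ 2 / (4 * \<theta> (k - 1) ^ 2)
           - (L * norm (x 0 - xs) ^ 2 / (real k + fista_zeta \<theta>) ^ 2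
              - L * norm (x 0 - xs) ^ 2 * ln (real k) / (real k + fista_zeta \<theta>) ^ 3))
       \<in> o(\<lambda>k. 1 / real k ^ 3)"
  proof -
  interpret thseq \<theta> using th0 thpos threc by unfold_locales auto
  have z: "fista_zeta \<theta> = lim d" by (simp add: fista_zeta_def d_def[abs_def])
  have P1: "\<forall>k\<ge>1. f (y k) - f xs \<le> L * norm (x 0 - xs) ^ 2 / (4 * \<theta> (k - 1) ^ 2)"
  proof (intro allI impI)
    fix k :: nat assume "k \<ge> 1"
    then have k: "k = Suc (k - 1)" by simp
    show "f (y k) - f xs \<le> L * norm (x 0 - xs) ^ 2 / (4 * \<theta> (k - 1) ^ 2)"
      using fista_rate[OF conv grad lips Lpos minim th0 thpos threc y0 yrec xrec, of "k - 1"]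
      by (subst k) simp
  qed
  show ?thesis using P1 asym[of "L * norm (x 0 - xs) ^ 2"] unfolding z by simp
qed

end
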